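(* Let $N\ge 3$, $M\ge 2$, $L\ge 1$ be integers, $P>0$, $\tau\in(0,1)$, $\sigma_r>0$, $c_3\in\mathbb{C}\setminus\{0\}$, and $\alpha,\beta\in\mathbb{C}$ with $|\alpha|^2+|\beta|^2=1$ and $\alpha\neq 0$. Let $\theta\in(-\pi/2,\pi/2)$ and $\mathbf{h}=[h_1,\dots,h_N]^T\in\mathbb{C}^N$ not in the span of $\mathbf{a}(\theta)$. Construct $\tilde{\mathbf{a}}=\mathbf{a}/\|\mathbf{a}\|$, $\tilde{\mathbf{h}}=\frac{\mathbf{h}-(\tilde{\mathbf{a}}^H\mathbf{h})\tilde{\mathbf{a}}}{\|\mathbf{h}-(\tilde{\mathbf{a}}^H\mathbf{h})\tilde{\mathbf{a}}\|}$, $\mathbf{t}_1=\alpha\tilde{\mathbf{a}}+\beta\tilde{\mathbf{h}}$, let $\mathbf{t}_3,\dots,\mathbf{t}_N$ be an orthonormal basis of the orthogonal complement of $\mathrm{span}\{\tilde{\mathbf{a}},\tilde{\mathbf{h}}\}$, and set $$\mathbf{R}_x=P\tau\,\mathbf{t}_1\mathbf{t}_1^H+\frac{(1-\tau)P}{N-2}\sum_{i=3}^N\mathbf{t}_i\mathbf{t}_i^H .$$ Define $\mathrm{CRB}(\theta)=\dfrac{Q}{\|\mathbf{b}'\|^2\mathbf{a}^H\mathbf{R}_x\mathbf{a}+\|\mathbf{b}\|^2\mathbf{a}'^H\mathbf{R}_x\mathbf{a}'-\frac{|\|\mathbf{b}\|^2\mathbf{a}^H\mathbf{R}_x\mathbf{a}'|^2}{\|\mathbf{b}\|^2\mathbf{a}^H\mathbf{R}_x\mathbf{a}}}$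 with $Q=\frac{\sigma_r^2}{2|c_3|^2L}$. Then $$\mathrm{CRB}(\theta)=Q\Big[\gamma_1\|\mathbf{b}'\|^2N|\alpha|^2+\gamma_2M\Big(\|\mathbf{a}'\|^2-\frac{(\sum_{i=1}^N -f_i't_i)^2+(\sum_{i=1}^N f_i'r_i)^2}{K-\frac1N(T^2+R^2)}\Big)\Big]^{-1},$$ where $\gamma_1=P\tau$, $\gamma_2=\frac{(1-\tau)P}{N-2}$, $f_i=\pi\sin(\theta)\frac{N-(2i-1)}{2}$, $f_i'=\pi\cos(\theta)\frac{N-(2i-1)}{2}$, $r_i=\mathrm{Re}(e^{jf_i}h_i)$, $t_i=\mathrm{Im}(e^{jf_i}h_i)$, $k_i=|h_i|^2$, $R=\sum_i r_i$, $T=\sum_i t_i$, $K=\sum_i k_i$, and $\|\mathbf{b}'\|^2=\frac{\pi^2\cos^2(\theta)M(M^2-1)}{12}$, $\|\mathbf{a}'\|^2=\frac{\pi^2\cos^2(\theta)N(N^2-1)}{12}$. Moreover, if $h_1,\dots,h_N$ are i.i.d. $\mathcal{CN}(0,1)$ and $\theta\sim\mathcal{U}(-\pi/2,\pi/2)$ independent of $\mathbf{h}$, then for every $\epsilon>0$, $P(\mathrm{CRB}(\theta)>\epsilon)\ge P_{Lc}(\epsilon)$, where, with $$u(\epsilon)=\sqrt6\,\sigma_r\Big(\epsilon MN\pi^2LP|c_3|^2\big(|\alpha|^2\tau(M^2-1)+\tfrac{(N^2-1)(1-\tau)}{N-2}\big)\Big)^{-1/2},$$ $P_{Lc}(\epsilon)=\frac{2}{\pi}\sin^{-1}(u(\epsilon))$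 when $u(\epsilon)<1$ and $P_{Lc}(\epsilon)=0$ otherwise.
   Context: $j=\sqrt{-1}$. $\mathbf{a}(\theta)\in\mathbb{C}^N$ has $i$-th entry $e^{-jf_i}$ with $f_i=\pi\sin(\theta)\frac{N-(2i-1)}{2}$; $\mathbf{b}(\theta)\in\mathbb{C}^M$ has $i$-th entry $e^{-j\pi\sin(\theta)\frac{M-(2i-1)}{2}}$; $\mathbf{a}'$, $\mathbf{b}'$ are derivatives with respect to $\theta$. This is the "SSJB" precoding scheme: $\mathbf{R}_x$ is the transmit covariance of the base station with total power $P$, fraction $\tau$ on user data. *)

theory Defs
  imports "HOL-Probability.Probability"
begin

text \<open>Vectors in C^N are functions nat => complex, indexed by 1..N.\<close>

definition fphase :: "nat \<Rightarrow> real \<Rightarrow> nat \<Rightarrow> real" where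
  "fphase N \<theta> i = pi * sin \<theta> * (real N - (2 * real i - 1)) / 2"

definition fphase' :: "nat \<Rightarrow> real \<Rightarrow> nat \<Rightarrow> real" where
  "fphase' N \<theta> i = pi * cos \<theta> * (real N - (2 * real i - 1)) / 2"

definition steer :: "nat \<Rightarrow> real \<Rightarrow> nat \<Rightarrow> complex" where
  "steer N \<theta> i = exp (- \<i> * complex_of_real (fphase N \<theta> i))"

definition steer' :: "nat \<Rightarrow> real \<Rightarrow> nat \<Rightarrow> complex" where
  "steer' N \<theta> i = vector_derivative (\<lambda>t. steer N t i) (at \<theta>)"

definition cinner :: "nat \<Rightarrow> (nat \<Rightarrow> complex) \<Rightarrow> (nat \<Rightarrow> complex) \<Rightarrow> complex" where
  "cinner N u v = (\<Sum>i=1..N. cnj (u i) * v i)"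

definition cnorm2 :: "nat \<Rightarrow> (nat \<Rightarrow> complex) \<Rightarrow> real" where
  "cnorm2 N u = (\<Sum>i=1..N. (cmod (u i))^2)"

definition qform :: "nat \<Rightarrow> (nat \<Rightarrow> complex) \<Rightarrow> (nat \<Rightarrow> nat \<Rightarrow> complex) \<Rightarrow> (nat \<Rightarrow> complex) \<Rightarrow> complex" where
  "qform N u R v = (\<Sum>i=1..N. \<Sum>k=1..N. cnj (u i) * R i k * v k)"

definition atil :: "nat \<Rightarrow> real \<Rightarrow> nat \<Rightarrow> complex" where
  "atil N \<theta> i = steer N \<theta> i / complex_of_real (sqrt (cnorm2 N (steer N \<theta>)))"

definition hperp :: "nat \<Rightarrow> real \<Rightarrow> (nat \<Rightarrow> complex) \<Rightarrow> nat \<Rightarrow> complex" where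
  "hperp N \<theta> h i = h i - cinner N (atil N \<theta>) h * atil N \<theta> i"

definition htil :: "nat \<Rightarrow> real \<Rightarrow> (nat \<Rightarrow> complex) \<Rightarrow> nat \<Rightarrow> complex" where
  "htil N \<theta> h i = hperp N \<theta> h i / complex_of_real (sqrt (cnorm2 N (hperp N \<theta> h)))"

definition tvec1 :: "nat \<Rightarrow> complex \<Rightarrow> complex \<Rightarrow> real \<Rightarrow> (nat \<Rightarrow> complex) \<Rightarrow> nat \<Rightarrow> complex" where
  "tvec1 N \<alpha> \<beta> \<theta> h i = \<alpha> * atil N \<theta> i + \<beta> * htil N \<theta> h i"

definition in_span_a :: "nat \<Rightarrow> real \<Rightarrow> (nat \<Rightarrow> complex) \<Rightarrow> bool" where
  "in_span_a N \<theta> h = (\<exists>c. \<forall>i\<in>{1..N}. h i = c * steer N \<theta> i)"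

definition is_compl_onb :: "nat \<Rightarrow> real \<Rightarrow> (nat \<Rightarrow> complex) \<Rightarrow> (nat \<Rightarrow> nat \<Rightarrow> complex) \<Rightarrow> bool" where
  "is_compl_onb N \<theta> h t \<longleftrightarrow>
     (\<forall>l\<in>{3..N}. \<forall>m\<in>{3..N}. cinner N (t l) (t m) = (if l = m then 1 else 0)) \<and>
     (\<forall>l\<in>{3..N}. cinner N (atil N \<theta>) (t l) = 0 \<and> cinner N (htil N \<theta> h) (t l) = 0) \<and>
     (\<forall>v. cinner N (atil N \<theta>) v = 0 \<and> cinner N (htil N \<theta> h) v = 0 \<longrightarrow>
        (\<exists>c. \<forall>i\<in>{1..N}. v i = (\<Sum>l=3..N. c l * t l i)))"

definition Rx :: "nat \<Rightarrow> real \<Rightarrow> real \<Rightarrow> complex \<Rightarrow> complex \<Rightarrow> real \<Rightarrow> (nat \<Rightarrow> complex)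
                  \<Rightarrow> (nat \<Rightarrow> nat \<Rightarrow> complex) \<Rightarrow> nat \<Rightarrow> nat \<Rightarrow> complex" where
  "Rx N P \<tau> \<alpha> \<beta> \<theta> h t i k =
     complex_of_real (P * \<tau>) * tvec1 N \<alpha> \<beta> \<theta> h i * cnj (tvec1 N \<alpha> \<beta> \<theta> h k)
     + complex_of_real ((1 - \<tau>) * P / (real N - 2)) * (\<Sum>l=3..N. t l i * cnj (t l k))"

definition crbQ :: "real \<Rightarrow> complex \<Rightarrow> nat \<Rightarrow> real" where
  "crbQ \<sigma> c3 L = \<sigma>^2 / (2 * (cmod c3)^2 * real L)"

definition CRB :: "nat \<Rightarrow> nat \<Rightarrow> nat \<Rightarrow> real \<Rightarrow> real \<Rightarrow> real \<Rightarrow> complex \<Rightarrow> complex \<Rightarrow> complex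
                   \<Rightarrow> real \<Rightarrow> (nat \<Rightarrow> complex) \<Rightarrow> (nat \<Rightarrow> nat \<Rightarrow> complex) \<Rightarrow> complex" where
  "CRB N M L P \<tau> \<sigma> c3 \<alpha> \<beta> \<theta> h t =
    (let R = Rx N P \<tau> \<alpha> \<beta> \<theta> h t;
         a = steer N \<theta>; a' = steer' N \<theta>;
         nb = complex_of_real (cnorm2 M (steer M \<theta>));
         nb' = complex_of_real (cnorm2 M (steer' M \<theta>))
     in complex_of_real (crbQ \<sigma> c3 L) /
        (nb' * qform N a R a + nb * qform N a' R a'
         - complex_of_real ((cmod (nb * qform N a R a'))^2) / (nb * qform N a R a)))"

definition uLc :: "nat \<Rightarrow> nat \<Rightarrow> nat \<Rightarrow> real \<Rightarrow> real \<Rightarrow> real \<Rightarrow> complex \<Rightarrow> complex \<Rightarrow> real \<Rightarrow> real" where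
  "uLc N M L P \<tau> \<sigma> c3 \<alpha> \<epsilon> =
     sqrt 6 * \<sigma> * inverse (sqrt (\<epsilon> * real M * real N * pi^2 * real L * P * (cmod c3)^2 *
        ((cmod \<alpha>)^2 * \<tau> * (real M ^ 2 - 1) + (real N ^ 2 - 1) * (1 - \<tau>) / (real N - 2))))"

definition PLc :: "nat \<Rightarrow> nat \<Rightarrow> nat \<Rightarrow> real \<Rightarrow> real \<Rightarrow> real \<Rightarrow> complex \<Rightarrow> complex \<Rightarrow> real \<Rightarrow> real" where
  "PLc N M L P \<tau> \<sigma> c3 \<alpha> \<epsilon> =
     (let u = uLc N M L P \<tau> \<sigma> c3 \<alpha> \<epsilon> in if u < 1 then 2 / pi * arcsin u else 0)"

definition CN01 :: "complex measure" where
  "CN01 = density lborel (\<lambda>z. ennreal (exp (- ((cmod z)^2)) / pi))"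

definition joint_law :: "nat \<Rightarrow> (real \<times> (nat \<Rightarrow> complex)) measure" where
  "joint_law N = uniform_measure lborel {-pi/2<..<pi/2} \<Otimes>\<^sub>M (\<Pi>\<^sub>M i\<in>{1..N}. CN01)"

end

theory Submission
  imports Defs
begin


lemma cnj_steer: "cnj (steer N \<theta> i) = exp (\<i> * complex_of_real (fphase N \<theta> i))"
  unfolding steer_def exp_cnj by simp

lemma cmod_steer: "cmod (steer N \<theta> i) = 1"
  unfolding steer_def by (simp add: norm_exp_i_times)

lemma steer_cnj_mult: "cnj (steer N \<theta> i) * steer N \<theta> i = 1"
  using complex_norm_square[of "steer N \<theta> i"] by (simp add: cmod_steer mult.commute)

lemma steer_nz: "steer N \<theta> i \<noteq> 0"
  unfolding steer_def by simp

lemma steer'_eq: "steer' N \<theta> i = - \<i> * complex_of_real (fphase' N \<theta> i) * steer N \<theta> i"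
proof -
  define c where "c = (real N - (2 * real i - 1))"
  define F where "F = (\<lambda>z::complex. exp (- \<i> * (of_real pi * sin z * of_real c / 2)))"
  have eq: "(\<lambda>t. steer N t i) = (\<lambda>t. F (of_real t))"
    by (rule ext) (simp add: F_def steer_def fphase_def c_def sin_of_real)
  have "(F has_field_derivative (- \<i> * (of_real pi * cos (of_real \<theta>) * of_real c / 2)) * F (of_real \<theta>)) (at (of_real \<theta>))"
    unfolding F_def by (auto intro!: derivative_eq_intros simp: algebra_simps)
  then have "((\<lambda>t. F (of_real t)) has_vector_derivative (- \<i> * (of_real pi * cos (of_real \<theta>) * of_real c / 2)) * F (of_real \<theta>)) (at \<theta>)"
    by (rule has_vector_derivative_real_field)
  then show ?thesis unfolding steer'_def eq
    by (subst vector_derivative_at) (auto simp: F_def steer_def fphase'_def fphase_def c_def cos_of_real sin_of_real)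
qed



lemma sum_i: "(\<Sum>i=1..n. real i) = real n * (real n + 1) / 2"
  by (induction n) (auto simp: field_simps)

lemma sum_i2: "(\<Sum>i=1..n. (real i)^2) = real n * (real n + 1) * (2 * real n + 1) / 6"
  by (induction n) (auto simp: field_simps power2_eq_square)

lemma sum_lin: "(\<Sum>i=1..N. (real N - (2 * real i - 1))) = 0"
proof -
  have "(\<Sum>i=1..N. (real N - (2 * real i - 1))) = (\<Sum>i=1..N. (real N + 1)) - 2 * (\<Sum>i=1..N. real i)"
    by (simp add: sum_subtractf sum_distrib_left algebra_simps)
  also have "\<dots> = 0" using sum_i[of N] by (simp add: algebra_simps)
  finally show ?thesis .
qed

lemma sum_sq: "(\<Sum>i=1..N. (real N - (2 * real i - 1))^2) = real N * ((real N)^2 - 1) / 3"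
proof -
  have "(\<Sum>i=1..N. (real N - (2 * real i - 1))^2) = (\<Sum>i=1..N. (real N + 1)^2) - 4 * (real N + 1) * (\<Sum>i=1..N. real i) + 4 * (\<Sum>i=1..N. (real i)^2)"
    by (simp add: sum_subtractf sum.distrib sum_distrib_left power2_eq_square algebra_simps)
  also have "\<dots> = real N * ((real N)^2 - 1) / 3" unfolding sum_i sum_i2 by (simp add: field_simps power2_eq_square power3_eq_cube)
  finally show ?thesis .
qed

lemma sum_fphase': "(\<Sum>i=1..N. fphase' N \<theta> i) = 0"
  unfolding fphase'_def using sum_lin[of N]
  by (simp add: sum_divide_distrib[symmetric] sum_distrib_left[symmetric] )

lemma sum_fphase'_sq: "(\<Sum>i=1..N. (fphase' N \<theta> i)^2) = pi^2 * (cos \<theta>)^2 * real N * (real N ^ 2 - 1) / 12"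
proof -
  have "(\<Sum>i=1..N. (fphase' N \<theta> i)^2) = (pi^2 * (cos \<theta>)^2 / 4) * (\<Sum>i=1..N. (real N - (2 * real i - 1))^2)"
    unfolding fphase'_def sum_distrib_left by (rule sum.cong) (simp_all add: power_mult_distrib power_divide)
  then show ?thesis unfolding sum_sq by simp
qed

lemma cnorm2_steer: "cnorm2 N (steer N \<theta>) = real N"
  unfolding cnorm2_def by (simp add: cmod_steer)

lemma cnorm2_steer': "cnorm2 N (steer' N \<theta>) = pi^2 * (cos \<theta>)^2 * real N * (real N ^ 2 - 1) / 12"
proof -
  have "cnorm2 N (steer' N \<theta>) = (\<Sum>i=1..N. (fphase' N \<theta> i)^2)"
    unfolding cnorm2_def steer'_eq by (rule sum.cong) (simp_all add: norm_mult cmod_steer)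
  then show ?thesis by (simp only: sum_fphase'_sq)
qed



lemma ci_cnj: "cnj (cinner N u v) = cinner N v u"
  unfolding cinner_def by (simp add: mult.commute)

lemma cnj_mult_self: "cnj z * z = complex_of_real ((cmod z)^2)"
  by (metis complex_norm_square mult.commute)

lemma ci_self: "cinner N u u = complex_of_real (cnorm2 N u)"
  unfolding cinner_def cnorm2_def of_real_sum
  by (rule sum.cong) (simp_all only: cnj_mult_self)

lemma ci_sum: "cinner N u (\<lambda>i. (\<Sum>l\<in>L. c l * z l i)) = (\<Sum>l\<in>L. c l * cinner N u (z l))"
proof -
  have "cinner N u (\<lambda>i. (\<Sum>l\<in>L. c l * z l i)) = (\<Sum>i=1..N. \<Sum>l\<in>L. c l * (cnj (u i) * z l i))"
    unfolding cinner_def by (simp add: sum_distrib_left algebra_simps)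
  also have "\<dots> = (\<Sum>l\<in>L. \<Sum>i=1..N. c l * (cnj (u i) * z l i))" by (rule sum.swap)
  also have "\<dots> = (\<Sum>l\<in>L. c l * cinner N u (z l))"
    unfolding cinner_def by (simp add: sum_distrib_left)
  finally show ?thesis .
qed

lemma ci_lin: "cinner N u (\<lambda>i. a * x i + b * y i + (\<Sum>l\<in>L. c l * z l i)) =
   a * cinner N u x + b * cinner N u y + (\<Sum>l\<in>L. c l * cinner N u (z l))"
proof -
  have "cinner N u (\<lambda>i. a * x i + b * y i + (\<Sum>l\<in>L. c l * z l i)) =
     a * cinner N u x + b * cinner N u y + cinner N u (\<lambda>i. (\<Sum>l\<in>L. c l * z l i))"
    unfolding cinner_def by (simp add: sum.distrib sum_distrib_left algebra_simps)
  then show ?thesis by (simp only: ci_sum)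
qed

lemma ci_lin2: "cinner N u (\<lambda>i. x i - a * y i - b * z i) = cinner N u x - a * cinner N u y - b * cinner N u z"
  unfolding cinner_def
  by (simp add: sum_subtractf sum.distrib sum_distrib_left algebra_simps)

lemma ci_cong: "(\<And>i. i \<in> {1..N} \<Longrightarrow> v i = w i) \<Longrightarrow> cinner N u v = cinner N u w"
  unfolding cinner_def by simp

lemma resolution:
  assumes e11: "cinner N e1 e1 = 1" and e22: "cinner N e2 e2 = 1" and e12: "cinner N e1 e2 = 0"
    and tt: "\<forall>l\<in>{3..N}. \<forall>m\<in>{3..N}. cinner N (t l) (t m) = (if l = m then 1 else 0)"
    and te: "\<forall>l\<in>{3..N}. cinner N e1 (t l) = 0 \<and> cinner N e2 (t l) = 0"
    and sp: "\<forall>v. cinner N e1 v = 0 \<and> cinner N e2 v = 0 \<longrightarrow>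
        (\<exists>c. \<forall>i\<in>{1..N}. v i = (\<Sum>l=3..N. c l * t l i))"
    and i: "i \<in> {1..N}"
  shows "v i = cinner N e1 v * e1 i + cinner N e2 v * e2 i + (\<Sum>l=3..N. cinner N (t l) v * t l i)"
proof -
  define w where "w = (\<lambda>i. v i - cinner N e1 v * e1 i - cinner N e2 v * e2 i)"
  have e21: "cinner N e2 e1 = 0" using e12 ci_cnj[of N e1 e2] by simp
  have "cinner N e1 w = 0" unfolding w_def ci_lin2 using e11 e12 by simp
  moreover have "cinner N e2 w = 0" unfolding w_def ci_lin2 using e22 e21 by simp
  ultimately obtain c where c: "\<forall>i\<in>{1..N}. w i = (\<Sum>l=3..N. c l * t l i)" using sp by blast
  have cm: "c m = cinner N (t m) v" if m: "m \<in> {3..N}" for m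
  proof -
    have te1: "cinner N (t m) e1 = 0" "cinner N (t m) e2 = 0"
      using te m ci_cnj[of N e1 "t m"] ci_cnj[of N e2 "t m"] by auto
    have "cinner N (t m) w = cinner N (t m) v" unfolding w_def ci_lin2 te1 by simp
    moreover have "cinner N (t m) w = cinner N (t m) (\<lambda>i. 0 * x i + 0 * x i + (\<Sum>l=3..N. c l * t l i))"
      using c by (intro ci_cong) simp
    moreover have "\<dots> = (\<Sum>l=3..N. c l * (if m = l then 1 else 0))"
      unfolding ci_lin using tt m by (auto intro!: sum.cong)
    moreover have "\<dots> = (\<Sum>l=3..N. if m = l then c l else 0)" by (rule sum.cong) auto
    moreover have "\<dots> = c m" using m by (simp add: sum.delta)
    ultimately show ?thesis by simp
  qed
  have "v i = w i + cinner N e1 v * e1 i + cinner N e2 v * e2 i" unfolding w_def by simp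
  also have "w i = (\<Sum>l=3..N. cinner N (t l) v * t l i)" using c i cm by simp
  finally show ?thesis by simp
qed

lemma parseval:
  assumes e11: "cinner N e1 e1 = 1" and e22: "cinner N e2 e2 = 1" and e12: "cinner N e1 e2 = 0"
    and tt: "\<forall>l\<in>{3..N}. \<forall>m\<in>{3..N}. cinner N (t l) (t m) = (if l = m then 1 else 0)"
    and te: "\<forall>l\<in>{3..N}. cinner N e1 (t l) = 0 \<and> cinner N e2 (t l) = 0"
    and sp: "\<forall>v. cinner N e1 v = 0 \<and> cinner N e2 v = 0 \<longrightarrow>
        (\<exists>c. \<forall>i\<in>{1..N}. v i = (\<Sum>l=3..N. c l * t l i))"
  shows "cnorm2 N v = (cmod (cinner N e1 v))^2 + (cmod (cinner N e2 v))^2 + (\<Sum>l=3..N. (cmod (cinner N (t l) v))^2)"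
proof -
  have "cinner N v v = cinner N v (\<lambda>i. cinner N e1 v * e1 i + cinner N e2 v * e2 i + (\<Sum>l=3..N. cinner N (t l) v * t l i))"
    by (intro ci_cong resolution[OF assms])
  also have "\<dots> = cinner N e1 v * cnj (cinner N e1 v) + cinner N e2 v * cnj (cinner N e2 v) + (\<Sum>l=3..N. cinner N (t l) v * cnj (cinner N (t l) v))"
    unfolding ci_lin ci_cnj ..
  also have "\<dots> = complex_of_real ((cmod (cinner N e1 v))^2 + (cmod (cinner N e2 v))^2 + (\<Sum>l=3..N. (cmod (cinner N (t l) v))^2))"
    by (simp only: of_real_add of_real_sum mult.commute[of _ "cnj _"] cnj_mult_self)
  finally show ?thesis unfolding ci_self by (simp only: of_real_eq_iff)
qed



lemma ci_scal: "cinner N u (\<lambda>i. c * v i) = c * cinner N u v"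
  unfolding cinner_def by (simp add: sum_distrib_left algebra_simps)

lemma ci_divR: "cinner N u (\<lambda>i. v i / c) = cinner N u v / c"
  unfolding cinner_def by (simp add: sum_divide_distrib)

lemma ci_divL_real: "cinner N (\<lambda>i. v i / complex_of_real r) w = cinner N v w / complex_of_real r"
  unfolding cinner_def by (simp add: sum_divide_distrib)

lemma ci_left_lin: "cinner N (\<lambda>i. a * x i + b * y i) v = cnj a * cinner N x v + cnj b * cinner N y v"
  unfolding cinner_def by (simp add: sum.distrib sum_distrib_left algebra_simps)

lemma ci_left_diff: "cinner N (\<lambda>i. x i - b * y i) v = cinner N x v - cnj b * cinner N y v"
  unfolding cinner_def by (simp add: sum_subtractf sum_distrib_left algebra_simps)

lemma steer_mult_cnj: "steer N \<theta> i * cnj (steer N \<theta> i) = 1"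
  using steer_cnj_mult[of N \<theta> i] by (simp add: mult.commute)

lemma sqrt_sq_c: "complex_of_real (sqrt (real N)) * complex_of_real (sqrt (real N)) = of_nat N"
  by (simp flip: of_real_mult)

lemma atil_eq: "atil N \<theta> i = steer N \<theta> i / complex_of_real (sqrt (real N))"
  unfolding atil_def cnorm2_steer ..

lemma steer_eq_atil: "N > 0 \<Longrightarrow> steer N \<theta> i = complex_of_real (sqrt (real N)) * atil N \<theta> i"
  unfolding atil_eq by simp

lemma ci_atil_atil: assumes "N > 0" shows "cinner N (atil N \<theta>) (atil N \<theta>) = 1"
proof -
  have "cinner N (atil N \<theta>) (atil N \<theta>) = (\<Sum>i=1..N. 1 / complex_of_real (real N))"
    unfolding cinner_def atil_eq
    by (rule sum.cong) (simp_all add: steer_cnj_mult steer_mult_cnj sqrt_sq_c field_simps)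
  also have "\<dots> = 1" using assms by simp
  finally show ?thesis .
qed

lemma ci_steer_right: "N > 0 \<Longrightarrow> cinner N u (steer N \<theta>) = complex_of_real (sqrt (real N)) * cinner N u (atil N \<theta>)"
proof -
  assume "N > 0"
  then have "cinner N u (steer N \<theta>) = cinner N u (\<lambda>i. complex_of_real (sqrt (real N)) * atil N \<theta> i)"
    by (intro ci_cong) (simp add: steer_eq_atil)
  then show ?thesis by (simp add: ci_scal)
qed

lemma ci_atil_steer': "cinner N (atil N \<theta>) (steer' N \<theta>) = 0"
proof -
  have "cinner N (atil N \<theta>) (steer' N \<theta>) = (\<Sum>i=1..N. (- \<i> / complex_of_real (sqrt (real N))) * complex_of_real (fphase' N \<theta> i))"
    unfolding cinner_def atil_eq steer'_eq
    by (rule sum.cong) (simp_all add: steer_cnj_mult steer_mult_cnj sqrt_sq_c field_simps)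
  also have "\<dots> = (- \<i> / complex_of_real (sqrt (real N))) * complex_of_real (\<Sum>i=1..N. fphase' N \<theta> i)"
    by (simp add: sum_distrib_left)
  finally show ?thesis unfolding sum_fphase' by simp
qed



lemma hperp_fun: "hperp N \<theta> h = (\<lambda>i. h i - cinner N (atil N \<theta>) h * atil N \<theta> i)"
  unfolding hperp_def[abs_def] ..

lemma ci_atil_hperp: assumes "N > 0" shows "cinner N (atil N \<theta>) (hperp N \<theta> h) = 0"
  unfolding hperp_fun using ci_lin2[of N "atil N \<theta>" h "cinner N (atil N \<theta>) h" "atil N \<theta>" 0 "atil N \<theta>"]
  by (simp add: ci_atil_atil[OF assms])

lemma cnorm2_hperp: assumes "N > 0"
  shows "cnorm2 N (hperp N \<theta> h) = cnorm2 N h - (cmod (cinner N (atil N \<theta>) h))^2"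
proof -
  let ?c = "cinner N (atil N \<theta>) h"
  have hp: "cinner N (hperp N \<theta> h) (atil N \<theta>) = 0"
    using ci_atil_hperp[OF assms, of \<theta> h] ci_cnj[of N "atil N \<theta>" "hperp N \<theta> h"] by simp
  have "cinner N (hperp N \<theta> h) (hperp N \<theta> h) = cinner N (hperp N \<theta> h) h"
    unfolding hperp_fun[of N \<theta> h, THEN fun_cong] 
    using ci_lin2[of N "hperp N \<theta> h" h ?c "atil N \<theta>" 0 "atil N \<theta>"] hp unfolding hperp_fun by simp
  also have "\<dots> = cinner N h h - cnj ?c * cinner N (atil N \<theta>) h"
    unfolding hperp_fun by (rule ci_left_diff)
  also have "\<dots> = complex_of_real (cnorm2 N h - (cmod ?c)^2)"
    by (simp add: ci_self cnj_mult_self)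
  finally show ?thesis unfolding ci_self by (simp only: of_real_eq_iff)
qed

lemma cnorm2_nonneg: "cnorm2 N u \<ge> 0"
  unfolding cnorm2_def by (simp add: sum_nonneg)

lemma cnorm2_hperp_pos: assumes "N > 0" and "\<not> in_span_a N \<theta> h"
  shows "cnorm2 N (hperp N \<theta> h) > 0"
proof (rule ccontr)
  assume "\<not> ?thesis"
  then have "cnorm2 N (hperp N \<theta> h) = 0" using cnorm2_nonneg[of N "hperp N \<theta> h"] by linarith
  then have "\<forall>i\<in>{1..N}. (cmod (hperp N \<theta> h i))^2 = 0"
    unfolding cnorm2_def by (subst sum_nonneg_eq_0_iff[symmetric]) auto
  then have "\<forall>i\<in>{1..N}. h i = (cinner N (atil N \<theta>) h / complex_of_real (sqrt (real N))) * steer N \<theta> i"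
    unfolding hperp_def atil_eq by auto
  then show False using assms(2) unfolding in_span_a_def by blast
qed

lemma htil_fun: "htil N \<theta> h = (\<lambda>i. hperp N \<theta> h i / complex_of_real (sqrt (cnorm2 N (hperp N \<theta> h))))"
  unfolding htil_def[abs_def] ..

lemma ci_atil_htil: assumes "N > 0" shows "cinner N (atil N \<theta>) (htil N \<theta> h) = 0"
  unfolding htil_fun ci_divR ci_atil_hperp[OF assms] by simp

lemma ci_htil_htil: assumes "N > 0" and "\<not> in_span_a N \<theta> h"
  shows "cinner N (htil N \<theta> h) (htil N \<theta> h) = 1"
proof -
  have p: "cnorm2 N (hperp N \<theta> h) > 0" by (rule cnorm2_hperp_pos[OF assms])
  have "cinner N (htil N \<theta> h) (htil N \<theta> h) = cinner N (hperp N \<theta> h) (hperp N \<theta> h) /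
     (complex_of_real (sqrt (cnorm2 N (hperp N \<theta> h))) * complex_of_real (sqrt (cnorm2 N (hperp N \<theta> h))))"
    unfolding htil_fun ci_divR ci_divL_real by simp
  also have "\<dots> = 1" unfolding ci_self using p by (simp flip: of_real_mult)
  finally show ?thesis .
qed

lemma aux_cnj_parts: "(- \<i> * complex_of_real f) * cnj w = complex_of_real (- f * Im w) - \<i> * complex_of_real (f * Re w)"
  by (simp add: complex_eq_iff algebra_simps)

lemma ci_h_steer':
  "cinner N h (steer' N \<theta>) = complex_of_real (\<Sum>i=1..N. - fphase' N \<theta> i * Im (exp (\<i> * complex_of_real (fphase N \<theta> i)) * h i))
     - \<i> * complex_of_real (\<Sum>i=1..N. fphase' N \<theta> i * Re (exp (\<i> * complex_of_real (fphase N \<theta> i)) * h i))"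
proof -
  have w: "cnj (h i) * steer N \<theta> i = cnj (exp (\<i> * complex_of_real (fphase N \<theta> i)) * h i)" for i
    by (simp add: cnj_steer[symmetric] mult.commute)
  have "cinner N h (steer' N \<theta>) = (\<Sum>i=1..N. complex_of_real (- fphase' N \<theta> i * Im (exp (\<i> * complex_of_real (fphase N \<theta> i)) * h i))
     - \<i> * complex_of_real (fphase' N \<theta> i * Re (exp (\<i> * complex_of_real (fphase N \<theta> i)) * h i)))"
    unfolding cinner_def steer'_eq
  proof (rule sum.cong[OF refl])
    fix i
    have "cnj (h i) * (- \<i> * complex_of_real (fphase' N \<theta> i) * steer N \<theta> i) =
       (- \<i> * complex_of_real (fphase' N \<theta> i)) * cnj (exp (\<i> * complex_of_real (fphase N \<theta> i)) * h i)"
      by (subst w[symmetric]) (simp add: algebra_simps)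
    then show "cnj (h i) * (- \<i> * complex_of_real (fphase' N \<theta> i) * steer N \<theta> i) =
       complex_of_real (- fphase' N \<theta> i * Im (exp (\<i> * complex_of_real (fphase N \<theta> i)) * h i))
     - \<i> * complex_of_real (fphase' N \<theta> i * Re (exp (\<i> * complex_of_real (fphase N \<theta> i)) * h i))"
      by (simp only: aux_cnj_parts)
  qed
  also have "\<dots> = complex_of_real (\<Sum>i=1..N. - fphase' N \<theta> i * Im (exp (\<i> * complex_of_real (fphase N \<theta> i)) * h i))
     - \<i> * complex_of_real (\<Sum>i=1..N. fphase' N \<theta> i * Re (exp (\<i> * complex_of_real (fphase N \<theta> i)) * h i))"
    by (simp add: sum_subtractf sum_distrib_left of_real_sum)
  finally show ?thesis .
qed

lemma cmod_sq_parts: "(cmod (complex_of_real x - \<i> * complex_of_real y))^2 = x^2 + y^2"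
  by (simp add: cmod_power2)

lemma ci_atil_h: assumes "N > 0"
  shows "cinner N (atil N \<theta>) h = (complex_of_real (\<Sum>i=1..N. Re (exp (\<i> * complex_of_real (fphase N \<theta> i)) * h i))
     + \<i> * complex_of_real (\<Sum>i=1..N. Im (exp (\<i> * complex_of_real (fphase N \<theta> i)) * h i))) / complex_of_real (sqrt (real N))"
proof -
  have "cinner N (atil N \<theta>) h = (\<Sum>i=1..N. exp (\<i> * complex_of_real (fphase N \<theta> i)) * h i) / complex_of_real (sqrt (real N))"
    unfolding cinner_def atil_eq by (simp add: sum_divide_distrib cnj_steer)
  also have "(\<Sum>i=1..N. exp (\<i> * complex_of_real (fphase N \<theta> i)) * h i) = complex_of_real (\<Sum>i=1..N. Re (exp (\<i> * complex_of_real (fphase N \<theta> i)) * h i))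
     + \<i> * complex_of_real (\<Sum>i=1..N. Im (exp (\<i> * complex_of_real (fphase N \<theta> i)) * h i))"
    by (simp add: complex_eq_iff Re_sum Im_sum)
  finally show ?thesis .
qed

lemma cmod_ci_atil_h_sq: assumes "N > 0"
  shows "(cmod (cinner N (atil N \<theta>) h))^2 = ((\<Sum>i=1..N. Im (exp (\<i> * complex_of_real (fphase N \<theta> i)) * h i))^2
     + (\<Sum>i=1..N. Re (exp (\<i> * complex_of_real (fphase N \<theta> i)) * h i))^2) / real N"
  unfolding ci_atil_h[OF assms] using assms
  by (simp add: norm_divide power_divide cmod_power2 add.commute)



lemma triple_swap: "(\<Sum>i\<in>I. \<Sum>k\<in>I. \<Sum>l\<in>L. f l i k) = (\<Sum>l\<in>L. \<Sum>i\<in>I. \<Sum>k\<in>I. f l i k)"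
proof -
  have "(\<Sum>i\<in>I. \<Sum>k\<in>I. \<Sum>l\<in>L. f l i k) = (\<Sum>i\<in>I. \<Sum>l\<in>L. \<Sum>k\<in>I. f l i k)"
    by (rule sum.cong[OF refl]) (rule sum.swap)
  also have "\<dots> = (\<Sum>l\<in>L. \<Sum>i\<in>I. \<Sum>k\<in>I. f l i k)" by (rule sum.swap)
  finally show ?thesis .
qed

lemma qform_gen:
  fixes A B :: complex
  shows "qform N u (\<lambda>i k. A * x i * cnj (x k) + B * (\<Sum>l=3..N. t l i * cnj (t l k))) v =
    A * cnj (cinner N x u) * cinner N x v + B * (\<Sum>l=3..N. cnj (cinner N (t l) u) * cinner N (t l) v)"
proof -
  have "qform N u (\<lambda>i k. A * x i * cnj (x k) + B * (\<Sum>l=3..N. t l i * cnj (t l k))) v =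
     (\<Sum>i=1..N. \<Sum>k=1..N. A * ((cnj (u i) * x i) * (cnj (x k) * v k)))
        + (\<Sum>i=1..N. \<Sum>k=1..N. \<Sum>l=3..N. B * ((cnj (u i) * t l i) * (cnj (t l k) * v k)))"
    unfolding qform_def sum.distrib[symmetric]
    by (intro sum.cong refl) (simp add: algebra_simps sum_distrib_left sum_distrib_right)
  also have "\<dots> = A * (\<Sum>i=1..N. \<Sum>k=1..N. (cnj (u i) * x i) * (cnj (x k) * v k))
      + B * (\<Sum>l=3..N. \<Sum>i=1..N. \<Sum>k=1..N. (cnj (u i) * t l i) * (cnj (t l k) * v k))"
    unfolding triple_swap by (simp add: sum_distrib_left)
  also have "\<dots> = A * cnj (cinner N x u) * cinner N x v
      + B * (\<Sum>l=3..N. cnj (cinner N (t l) u) * cinner N (t l) v)"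
    unfolding ci_cnj by (simp add: cinner_def sum_product mult.assoc)
  finally show ?thesis .
qed

lemma qform_Rx:
  "qform N u (Rx N P \<tau> \<alpha> \<beta> \<theta> h t) v =
    complex_of_real (P * \<tau>) * cnj (cinner N (tvec1 N \<alpha> \<beta> \<theta> h) u) * cinner N (tvec1 N \<alpha> \<beta> \<theta> h) v
    + complex_of_real ((1 - \<tau>) * P / (real N - 2)) * (\<Sum>l=3..N. cnj (cinner N (t l) u) * cinner N (t l) v)"
proof -
  have "Rx N P \<tau> \<alpha> \<beta> \<theta> h t = (\<lambda>i k. complex_of_real (P * \<tau>) * tvec1 N \<alpha> \<beta> \<theta> h i * cnj (tvec1 N \<alpha> \<beta> \<theta> h k) + complex_of_real ((1 - \<tau>) * P / (real N - 2)) * (\<Sum>l=3..N. t l i * cnj (t l k)))"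
    unfolding Rx_def[abs_def] ..
  then show ?thesis by (simp only: qform_gen)
qed



lemma crb_main:
  fixes N M L :: nat and P \<tau> \<sigma> :: real and c3 \<alpha> \<beta> :: complex and \<theta> :: real
    and h :: "nat \<Rightarrow> complex" and t :: "nat \<Rightarrow> nat \<Rightarrow> complex"
  assumes N3: "N \<ge> 3" and M2: "M \<ge> 2" and P: "P > 0" and tau: "0 < \<tau>" "\<tau> < 1" and al: "\<alpha> \<noteq> 0"
    and nsp: "\<not> in_span_a N \<theta> h" and onb: "is_compl_onb N \<theta> h t"
  defines "X \<equiv> (\<Sum>i=1..N. - fphase' N \<theta> i * Im (exp (\<i> * complex_of_real (fphase N \<theta> i)) * h i))^2
              + (\<Sum>i=1..N. fphase' N \<theta> i * Re (exp (\<i> * complex_of_real (fphase N \<theta> i)) * h i))^2"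
    and "Kn \<equiv> (\<Sum>i=1..N. (cmod (h i))^2) - ((\<Sum>i=1..N. Im (exp (\<i> * complex_of_real (fphase N \<theta> i)) * h i))^2
              + (\<Sum>i=1..N. Re (exp (\<i> * complex_of_real (fphase N \<theta> i)) * h i))^2) / real N"
  shows "CRB N M L P \<tau> \<sigma> c3 \<alpha> \<beta> \<theta> h t = complex_of_real (crbQ \<sigma> c3 L * inverse
              (P * \<tau> * cnorm2 M (steer' M \<theta>) * real N * (cmod \<alpha>)^2
               + (1 - \<tau>) * P / (real N - 2) * real M * (cnorm2 N (steer' N \<theta>) - X / Kn)))"
    and "X / Kn \<le> cnorm2 N (steer' N \<theta>)" and "0 < Kn"
proof -
  have N0: "N > 0" using N3 by simp
  define e1 where "e1 = atil N \<theta>"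
  define e2 where "e2 = htil N \<theta> h"
  define t1 where "t1 = tvec1 N \<alpha> \<beta> \<theta> h"
  define s where "s = complex_of_real (sqrt (real N))"
  define a where "a = steer N \<theta>"
  define a' where "a' = steer' N \<theta>"
  have e11: "cinner N e1 e1 = 1" unfolding e1_def by (rule ci_atil_atil[OF N0])
  have e22: "cinner N e2 e2 = 1" unfolding e2_def by (rule ci_htil_htil[OF N0 nsp])
  have e12: "cinner N e1 e2 = 0" unfolding e1_def e2_def by (rule ci_atil_htil[OF N0])
  have e21: "cinner N e2 e1 = 0" using e12 ci_cnj[of N e1 e2] by simp
  note onb' = onb[unfolded is_compl_onb_def, folded e1_def e2_def]
  have tt: "\<forall>l\<in>{3..N}. \<forall>m\<in>{3..N}. cinner N (t l) (t m) = (if l = m then 1 else 0)" using onb' by blast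
  have te: "\<forall>l\<in>{3..N}. cinner N e1 (t l) = 0 \<and> cinner N e2 (t l) = 0" using onb' by blast
  have sp: "\<forall>v. cinner N e1 v = 0 \<and> cinner N e2 v = 0 \<longrightarrow>
        (\<exists>c. \<forall>i\<in>{1..N}. v i = (\<Sum>l=3..N. c l * t l i))" using onb' by blast
  have ta: "cinner N (t l) a = 0" if "l \<in> {3..N}" for l
  proof -
    have "cinner N (t l) e1 = 0" using te that ci_cnj[of N e1 "t l"] by auto
    then show ?thesis unfolding a_def using ci_steer_right[OF N0, of "t l" \<theta>] e1_def by simp
  qed
  have t1_fun: "t1 = (\<lambda>i. \<alpha> * e1 i + \<beta> * e2 i)" unfolding t1_def e1_def e2_def tvec1_def[abs_def] ..
  have t1a: "cinner N t1 a = cnj \<alpha> * s"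
    unfolding t1_fun ci_left_lin a_def ci_steer_right[OF N0] s_def[symmetric]
    using e11 e21 unfolding e1_def e2_def by simp
  define z where "z = cinner N t1 a'"
  define S where "S = (\<Sum>l=3..N. (cmod (cinner N (t l) a'))^2)"
  define g1 where "g1 = P * \<tau>"
  define g2 where "g2 = (1 - \<tau>) * P / (real N - 2)"
  have ss: "cnj s * s = of_nat N" unfolding s_def by (simp flip: of_real_mult)
  have qaa: "qform N a (Rx N P \<tau> \<alpha> \<beta> \<theta> h t) a = complex_of_real (g1 * (cmod \<alpha>)^2 * real N)"
  proof -
    have "qform N a (Rx N P \<tau> \<alpha> \<beta> \<theta> h t) a = complex_of_real g1 * (cnj \<alpha> * \<alpha>) * (cnj s * s)"
      unfolding qform_Rx t1_def[symmetric] t1a g1_def using ta by (simp add: algebra_simps)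
    moreover have "(complex_of_real (cmod s))^2 = of_nat N" unfolding s_def
      by (simp flip: of_real_power)
    ultimately show ?thesis unfolding cnj_mult_self by simp
  qed
  have qaa': "qform N a (Rx N P \<tau> \<alpha> \<beta> \<theta> h t) a' = complex_of_real g1 * (\<alpha> * cnj s) * z"
    unfolding qform_Rx t1_def[symmetric] t1a g1_def z_def using ta by simp
  have qa'a': "qform N a' (Rx N P \<tau> \<alpha> \<beta> \<theta> h t) a' = complex_of_real (g1 * (cmod z)^2 + g2 * S)"
    unfolding qform_Rx t1_def[symmetric] g1_def g2_def z_def S_def
    by (simp add: cnj_mult_self)
  have cm: "(cmod (complex_of_real (real M) * qform N a (Rx N P \<tau> \<alpha> \<beta> \<theta> h t) a'))^2
      = (real M)^2 * g1^2 * (cmod \<alpha>)^2 * real N * (cmod z)^2"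
  proof -
    have "(cmod s)^2 = real N" unfolding s_def by simp
    then show ?thesis unfolding qaa' by (simp add: norm_mult power_mult_distrib)
  qed
  have g1pos: "g1 > 0" unfolding g1_def using P tau by simp
  have apos: "(cmod \<alpha>)^2 > 0" using al by simp
  have Mpos: "real M > 0" using M2 by simp
  have Npos: "real N > 0" using N0 by simp
  define nbp where "nbp = cnorm2 M (steer' M \<theta>)"
  have den: "complex_of_real nbp * qform N a (Rx N P \<tau> \<alpha> \<beta> \<theta> h t) a
       + complex_of_real (real M) * qform N a' (Rx N P \<tau> \<alpha> \<beta> \<theta> h t) a'
       - complex_of_real ((cmod (complex_of_real (real M) * qform N a (Rx N P \<tau> \<alpha> \<beta> \<theta> h t) a'))^2)
         / (complex_of_real (real M) * qform N a (Rx N P \<tau> \<alpha> \<beta> \<theta> h t) a)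
     = complex_of_real (g1 * nbp * real N * (cmod \<alpha>)^2 + g2 * real M * S)"
  proof -
    have "(real M)^2 * g1^2 * (cmod \<alpha>)^2 * real N * (cmod z)^2 / (real M * (g1 * (cmod \<alpha>)^2 * real N))
        = real M * g1 * (cmod z)^2"
      using g1pos apos Mpos Npos al by (simp add: field_simps power2_eq_square)
    then have r: "nbp * (g1 * (cmod \<alpha>)^2 * real N) + real M * (g1 * (cmod z)^2 + g2 * S)
        - (real M)^2 * g1^2 * (cmod \<alpha>)^2 * real N * (cmod z)^2 / (real M * (g1 * (cmod \<alpha>)^2 * real N))
        = g1 * nbp * real N * (cmod \<alpha>)^2 + g2 * real M * S"
      by (simp add: algebra_simps)
    show ?thesis unfolding qaa qa'a' cm r[symmetric] by simp
  qed
  have pars: "cnorm2 N a' = (cmod (cinner N e1 a'))^2 + (cmod (cinner N e2 a'))^2 + S"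
    unfolding S_def by (rule parseval[OF e11 e22 e12 tt te sp])
  have e1a': "cinner N e1 a' = 0" unfolding e1_def a'_def by (rule ci_atil_steer')
  have nrm: "cnorm2 N (hperp N \<theta> h) = Kn"
    unfolding cnorm2_hperp[OF N0] cmod_ci_atil_h_sq[OF N0] Kn_def cnorm2_def[of N h] ..
  show nrmpos: "0 < Kn" using cnorm2_hperp_pos[OF N0 nsp] nrm by simp
  have e2a': "cinner N e2 a' = cinner N h a' / complex_of_real (sqrt Kn)"
  proof -
    have "cinner N (hperp N \<theta> h) a' = cinner N h a'"
      unfolding hperp_fun ci_left_diff using e1a' unfolding e1_def by simp
    then show ?thesis unfolding e2_def htil_fun ci_divL_real nrm by simp
  qed
  have Xeq: "(cmod (cinner N e2 a'))^2 = X / Kn"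
  proof -
    have "(cmod (cinner N e2 a'))^2 = (cmod (cinner N h a'))^2 / Kn"
      unfolding e2a' using nrmpos by (simp add: norm_divide power_divide)
    also have "\<dots> = X / Kn" unfolding a'_def ci_h_steer'[of N h \<theta>] X_def
      by (simp add: cmod_power2)
    finally show ?thesis .
  qed
  have Seq: "S = cnorm2 N (steer' N \<theta>) - X / Kn"
    using pars e1a' Xeq unfolding a'_def by simp
  have Seq': "S = cnorm2 N a' - X / Kn" using Seq unfolding a'_def .
  have Snn: "S \<ge> 0" unfolding S_def by (simp add: sum_nonneg)
  show "X / Kn \<le> cnorm2 N (steer' N \<theta>)" using Seq Snn by simp
  show "CRB N M L P \<tau> \<sigma> c3 \<alpha> \<beta> \<theta> h t = complex_of_real (crbQ \<sigma> c3 L * inverse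
              (P * \<tau> * cnorm2 M (steer' M \<theta>) * real N * (cmod \<alpha>)^2
               + (1 - \<tau>) * P / (real N - 2) * real M * (cnorm2 N (steer' N \<theta>) - X / Kn)))"
    unfolding CRB_def Let_def cnorm2_steer a_def[symmetric] a'_def[symmetric] nbp_def[symmetric] den
    unfolding Seq'[symmetric] g1_def g2_def
    by (simp add: divide_inverse flip: of_real_inverse of_real_mult of_real_add)
qed



lemma sets_CN01[measurable_cong]: "sets CN01 = sets borel"
  unfolding CN01_def by simp

lemma space_CN01[simp]: "space CN01 = UNIV"
  unfolding CN01_def by simp

lemma sets_U[measurable_cong]: "sets (uniform_measure lborel {-pi/2<..<pi/2}) = sets borel"
  by simp

lemma CN01_prob: "prob_space CN01"
proof
  define g where "g = (\<lambda>(b::complex) (y::real). ennreal (normal_density 0 (sqrt (1/2)) y))"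
  have gi: "(\<integral>\<^sup>+y. g b y \<partial>lborel) = 1" for b
  proof -
    interpret prob_space "density lborel (normal_density 0 (sqrt (1/2)))" by (rule prob_space_normal_density) simp
    show ?thesis using emeasure_space_1 unfolding g_def by (simp add: emeasure_density)
  qed
  have pt: "ennreal (exp (- ((cmod z)^2)) / pi) = (\<Prod>b\<in>Basis. g b (z \<bullet> b))" for z :: complex
  proof -
    have "(\<Prod>b\<in>Basis. g b (z \<bullet> b)) = g 1 (Re z) * g \<i> (Im z)"
      by (simp add: Basis_complex_def)
    also have "\<dots> = ennreal (normal_density 0 (sqrt (1/2)) (Re z) * normal_density 0 (sqrt (1/2)) (Im z))"
      unfolding g_def by (simp add: ennreal_mult)
    also have "normal_density 0 (sqrt (1/2)) (Re z) * normal_density 0 (sqrt (1/2)) (Im z) = exp (- ((cmod z)^2)) / pi"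
      unfolding normal_density_def cmod_power2
      by (simp add: real_sqrt_divide exp_add[symmetric] field_simps)
    finally show ?thesis by simp
  qed
  have "emeasure CN01 (space CN01) = (\<integral>\<^sup>+z. ennreal (exp (- ((cmod z)^2)) / pi) \<partial>lborel)"
    unfolding CN01_def by (subst emeasure_density) auto
  also have "\<dots> = (\<integral>\<^sup>+z. (\<Prod>b\<in>Basis. g b (z \<bullet> b)) \<partial>lborel)"
    by (simp only: pt)
  also have "\<dots> = (\<Prod>b\<in>(Basis::complex set). (\<integral>\<^sup>+y. g b y \<partial>lborel))"
    by (rule nn_integral_lborel_prod) (auto simp: g_def)
  also have "\<dots> = 1" by (simp add: gi)
  finally show "emeasure CN01 (space CN01) = 1" .
qed

lemma Omega_prob: "prob_space (\<Pi>\<^sub>M i\<in>{1..N}. CN01)"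
  by (rule prob_space_PiM) (rule CN01_prob)

lemma U_prob: "prob_space (uniform_measure lborel {-pi/2<..<pi/2})"
  by (rule prob_space_uniform_measure) auto

lemma J_prob: "prob_space (joint_law N)"
  unfolding joint_law_def by (intro prob_space_pair U_prob Omega_prob)

lemma CN01_singleton: "emeasure CN01 {p} = 0"
proof -
  have "emeasure CN01 {p} = (\<integral>\<^sup>+z. ennreal (exp (- ((cmod z)^2)) / pi) * indicator {p} z \<partial>lborel)"
    unfolding CN01_def by (subst emeasure_density) auto
  also have "\<dots> = (\<integral>\<^sup>+z. 0 \<partial>lborel)"
  proof -
    have "AE z in lborel. ennreal (exp (- ((cmod z)^2)) / pi) * indicator {p} z = 0"
      using AE_lborel_singleton[of p] by eventually_elim auto
    from nn_integral_cong_AE[OF this] show ?thesis by simp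
  qed
  finally show ?thesis by simp
qed

lemma section_null:
  fixes N :: nat and c :: complex
  assumes N: "N \<ge> 2"
  shows "emeasure (\<Pi>\<^sub>M i\<in>{1..N}. CN01) {h \<in> space (\<Pi>\<^sub>M i\<in>{1..N}. CN01). h 2 = h 1 * c} = 0"
proof -
  interpret CN: prob_space CN01 by (rule CN01_prob)
  interpret PS: product_sigma_finite "\<lambda>_. CN01"
    unfolding product_sigma_finite_def by (auto intro: CN.sigma_finite_measure_axioms)
  define I' where "I' = {1..N} - {2}"
  have ins: "{1..N} = insert 2 I'" using N unfolding I'_def by auto
  have I'f: "finite I'" "2 \<notin> I'" unfolding I'_def by auto
  have one: "1 \<in> I'" using N unfolding I'_def by auto
  define A where "A = {h \<in> space (\<Pi>\<^sub>M i\<in>{1..N}. CN01). h 2 = h 1 * c}"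
  have two: "2 \<in> {1..N}" "1 \<in> {1..N}" using N by auto
  have Am: "A \<in> sets (\<Pi>\<^sub>M i\<in>{1..N}. CN01)"
    unfolding A_def using two by measurable
  have "emeasure (\<Pi>\<^sub>M i\<in>{1..N}. CN01) A = (\<integral>\<^sup>+h. indicator A h \<partial>(\<Pi>\<^sub>M i\<in>{1..N}. CN01))"
    using Am by simp
  also have "\<dots> = (\<integral>\<^sup>+x. (\<integral>\<^sup>+y. indicator A (x(2 := y)) \<partial>CN01) \<partial>(\<Pi>\<^sub>M i\<in>I'. CN01))"
    unfolding ins by (rule PS.product_nn_integral_insert[OF I'f]) (use Am ins in simp)
  also have "\<dots> = (\<integral>\<^sup>+x. 0 \<partial>(\<Pi>\<^sub>M i\<in>I'. CN01))"
  proof (rule nn_integral_cong)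
    fix x assume x: "x \<in> space (\<Pi>\<^sub>M i\<in>I'. CN01)"
    have "(\<integral>\<^sup>+y. indicator A (x(2 := y)) \<partial>CN01) = (\<integral>\<^sup>+y. indicator {x 1 * c} y \<partial>CN01)"
    proof (rule nn_integral_cong)
      fix y
      have "x(2 := y) \<in> space (\<Pi>\<^sub>M i\<in>{1..N}. CN01)"
        using x unfolding ins space_PiM by (auto simp: PiE_def extensional_def)
      then show "indicator A (x(2 := y)) = (indicator {x 1 * c} y :: ennreal)"
        unfolding A_def by (auto simp: indicator_def)
    qed
    also have "\<dots> = 0" by (simp add: CN01_singleton)
    finally show "(\<integral>\<^sup>+y. indicator A (x(2 := y)) \<partial>CN01) = 0" .
  qed
  finally show ?thesis unfolding A_def by simp
qed



lemma Z_null: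
  fixes N :: nat and g :: "real \<Rightarrow> complex"
  assumes N: "N \<ge> 2" and g[measurable]: "g \<in> borel_measurable borel"
  shows "{x \<in> space (joint_law N). snd x 2 = snd x 1 * g (fst x)} \<in> null_sets (joint_law N)"
proof -
  interpret O: prob_space "\<Pi>\<^sub>M i\<in>{1..N}. CN01" by (rule Omega_prob)
  have two: "2 \<in> {1..N}" "1 \<in> {1..N}" using N by auto
  define Z where "Z = {x \<in> space (joint_law N). snd x 2 = snd x 1 * g (fst x)}"
  have Zm: "Z \<in> sets (joint_law N)" unfolding Z_def joint_law_def using two by measurable
  have "emeasure (joint_law N) Z = (\<integral>\<^sup>+\<theta>. emeasure (\<Pi>\<^sub>M i\<in>{1..N}. CN01) (Pair \<theta> -` Z) \<partial>uniform_measure lborel {-pi/2<..<pi/2})"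
    unfolding joint_law_def by (rule O.emeasure_pair_measure_alt, rule Zm[unfolded joint_law_def])
  also have "\<dots> = (\<integral>\<^sup>+\<theta>. 0 \<partial>uniform_measure lborel {-pi/2<..<pi/2})"
  proof (rule nn_integral_cong)
    fix \<theta>
    have "Pair \<theta> -` Z = {h \<in> space (\<Pi>\<^sub>M i\<in>{1..N}. CN01). h 2 = h 1 * g \<theta>}"
      unfolding Z_def joint_law_def by (auto simp: space_pair_measure)
    then show "emeasure (\<Pi>\<^sub>M i\<in>{1..N}. CN01) (Pair \<theta> -` Z) = 0"
      using section_null[OF N] by simp
  qed
  finally show ?thesis using Zm unfolding Z_def by (simp add: null_sets_def)
qed

lemma measure_A:
  fixes u :: real
  assumes u: "0 < u" "u < 1"
  shows "measure (uniform_measure lborel {-pi/2<..<pi/2}) {\<theta> \<in> {-pi/2<..<pi/2}. cos \<theta> < u} = 2 / pi * arcsin u"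
proof -
  define a where "a = arccos u"
  have a: "a = pi/2 - arcsin u" unfolding a_def using u by (simp add: arccos_arcsin_eq)
  have as: "0 < arcsin u" "arcsin u < pi/2"
    using arcsin_less_mono[of 0 u] arcsin_less_mono[of u 1] u by auto
  have ca: "cos a = u" unfolding a_def using u by simp
  have a0: "0 < a" "a < pi/2" using a as by auto
  have eqA: "{\<theta> \<in> {-pi/2<..<pi/2}. cos \<theta> < u} = {-pi/2<..<-a} \<union> {a<..<pi/2}"
  proof (intro set_eqI iffI)
    fix \<theta> assume th: "\<theta> \<in> {\<theta> \<in> {-pi/2<..<pi/2}. cos \<theta> < u}"
    have "cos \<bar>\<theta>\<bar> < cos a" using th ca by (simp add: abs_if)
    then have "a < \<bar>\<theta>\<bar>" using th a0 by (subst (asm) cos_mono_less_eq) auto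
    then show "\<theta> \<in> {-pi/2<..<-a} \<union> {a<..<pi/2}" using th by (auto simp: abs_if split: if_splits)
  next
    fix \<theta> assume th: "\<theta> \<in> {-pi/2<..<-a} \<union> {a<..<pi/2}"
    then have "a < \<bar>\<theta>\<bar>" "\<bar>\<theta>\<bar> < pi/2" using a0 by auto
    then have "cos \<bar>\<theta>\<bar> < cos a" using a0 by (subst cos_mono_less_eq) auto
    then show "\<theta> \<in> {\<theta> \<in> {-pi/2<..<pi/2}. cos \<theta> < u}" using th ca a0 by (auto simp: abs_if split: if_splits)
  qed
  have "measure lborel ({-pi/2<..<-a} \<union> {a<..<pi/2}) = measure lborel {-pi/2<..<-a} + measure lborel {a<..<pi/2}"
    by (rule measure_Union) (use a0 in auto)
  also have "\<dots> = 2 * arcsin u" using a0 a by simp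
  finally have m: "measure lborel ({-pi/2<..<-a} \<union> {a<..<pi/2}) = 2 * arcsin u" .
  have "measure (uniform_measure lborel {-pi/2<..<pi/2}) {\<theta> \<in> {-pi/2<..<pi/2}. cos \<theta> < u}
     = measure lborel ({-pi/2<..<pi/2} \<inter> ({-pi/2<..<-a} \<union> {a<..<pi/2})) / measure lborel {-pi/2<..<pi/2}"
    unfolding eqA by (rule measure_uniform_measure) auto
  also have "{-pi/2<..<pi/2} \<inter> ({-pi/2<..<-a} \<union> {a<..<pi/2}) = {-pi/2<..<-a} \<union> {a<..<pi/2}"
    using a0 by auto
  finally show ?thesis using m by simp
qed



definition RR :: "nat \<Rightarrow> real \<Rightarrow> (nat \<Rightarrow> complex) \<Rightarrow> real" where
  "RR N \<theta> h = (\<Sum>i=1..N. Re (exp (\<i> * complex_of_real (fphase N \<theta> i)) * h i))"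
definition TT :: "nat \<Rightarrow> real \<Rightarrow> (nat \<Rightarrow> complex) \<Rightarrow> real" where
  "TT N \<theta> h = (\<Sum>i=1..N. Im (exp (\<i> * complex_of_real (fphase N \<theta> i)) * h i))"
definition KK :: "nat \<Rightarrow> (nat \<Rightarrow> complex) \<Rightarrow> real" where
  "KK N h = (\<Sum>i=1..N. (cmod (h i))^2)"
definition XA :: "nat \<Rightarrow> real \<Rightarrow> (nat \<Rightarrow> complex) \<Rightarrow> real" where
  "XA N \<theta> h = (\<Sum>i=1..N. - fphase' N \<theta> i * Im (exp (\<i> * complex_of_real (fphase N \<theta> i)) * h i))"
definition XB :: "nat \<Rightarrow> real \<Rightarrow> (nat \<Rightarrow> complex) \<Rightarrow> real" where
  "XB N \<theta> h = (\<Sum>i=1..N. fphase' N \<theta> i * Re (exp (\<i> * complex_of_real (fphase N \<theta> i)) * h i))"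

abbreviation JL :: "nat \<Rightarrow> (real \<times> (nat \<Rightarrow> complex)) measure" where
  "JL N \<equiv> uniform_measure lborel {-pi/2<..<pi/2} \<Otimes>\<^sub>M (\<Pi>\<^sub>M i\<in>{1..N}. CN01)"

lemma meas_comp[measurable]: "i \<in> {1..N} \<Longrightarrow> (\<lambda>x. snd x i) \<in> measurable (JL N) borel"
  by measurable

lemma meas_RR[measurable]: "(\<lambda>x. RR N (fst x) (snd x)) \<in> borel_measurable (JL N)"
  unfolding RR_def fphase_def by (rule borel_measurable_sum) measurable
lemma meas_TT[measurable]: "(\<lambda>x. TT N (fst x) (snd x)) \<in> borel_measurable (JL N)"
  unfolding TT_def fphase_def by (rule borel_measurable_sum) measurable
lemma meas_KK[measurable]: "(\<lambda>x. KK N (snd x)) \<in> borel_measurable (JL N)"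
  unfolding KK_def by (rule borel_measurable_sum) measurable
lemma meas_XA[measurable]: "(\<lambda>x. XA N (fst x) (snd x)) \<in> borel_measurable (JL N)"
  unfolding XA_def fphase_def fphase'_def by (rule borel_measurable_sum) measurable
lemma meas_XB[measurable]: "(\<lambda>x. XB N (fst x) (snd x)) \<in> borel_measurable (JL N)"
  unfolding XB_def fphase_def fphase'_def by (rule borel_measurable_sum) measurable


lemma span_iff:
  assumes "N \<ge> 1"
  shows "in_span_a N \<theta> h \<longleftrightarrow> (\<forall>i\<in>{1..N}. h i = h 1 / steer N \<theta> 1 * steer N \<theta> i)"
proof
  assume "in_span_a N \<theta> h"
  then obtain c where c: "\<forall>i\<in>{1..N}. h i = c * steer N \<theta> i" unfolding in_span_a_def by blast
  then have "h 1 / steer N \<theta> 1 = c" using assms steer_nz[of N \<theta> 1] by auto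
  then show "\<forall>i\<in>{1..N}. h i = h 1 / steer N \<theta> 1 * steer N \<theta> i" using c by blast
next
  assume "\<forall>i\<in>{1..N}. h i = h 1 / steer N \<theta> 1 * steer N \<theta> i"
  then show "in_span_a N \<theta> h" unfolding in_span_a_def by blast
qed


lemma meas_steer[measurable]: "(\<lambda>\<theta>. steer N \<theta> i) \<in> borel_measurable borel"
  unfolding steer_def fphase_def by measurable

lemma pred_span1:
  assumes i: "i \<in> {1..N}" and one: "1 \<in> {1..N}"
  shows "Measurable.pred (JL N) (\<lambda>x. snd x i = snd x 1 / steer N (fst x) 1 * steer N (fst x) i)"
  using i one by measurable
lemma pred_span[measurable]:
  assumes "N \<ge> 1"
  shows "Measurable.pred (JL N) (\<lambda>x. \<forall>i\<in>{1..N}. snd x i = snd x 1 / steer N (fst x) 1 * steer N (fst x) i)"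
proof (rule pred_intros_finite)
  fix i assume i: "i \<in> {1..N}"
  have one: "1 \<in> {1..N}" using assms by simp
  show "Measurable.pred (JL N) (\<lambda>x. snd x i = snd x 1 / steer N (fst x) 1 * steer N (fst x) i)"
    by (rule pred_span1[OF i one])
qed simp

lemma bound:
  fixes N M L :: nat and P \<tau> \<sigma> \<epsilon> c Y :: real and c3 \<alpha> :: complex
  assumes N3: "N \<ge> 3" and M2: "M \<ge> 2" and L1: "L \<ge> 1" and P: "P > 0" and t0: "0 < \<tau>" and t1: "\<tau> < 1"
    and s: "\<sigma> > 0" and c3: "c3 \<noteq> 0" and al: "\<alpha> \<noteq> 0" and e: "\<epsilon> > 0"
    and c0: "0 < c" and cu: "c < uLc N M L P \<tau> \<sigma> c3 \<alpha> \<epsilon>"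
    and Y0: "0 \<le> Y" and Y1: "Y \<le> pi^2 * c^2 * real N * (real N ^ 2 - 1) / 12"
  shows "\<epsilon> < crbQ \<sigma> c3 L * inverse (P * \<tau> * (pi^2 * c^2 * real M * (real M ^ 2 - 1) / 12) * real N * (cmod \<alpha>)^2
          + (1 - \<tau>) * P / (real N - 2) * real M * (pi^2 * c^2 * real N * (real N ^ 2 - 1) / 12 - Y))"
proof -
  define a2 where "a2 = (cmod \<alpha>)^2"
  define K1 where "K1 = a2 * \<tau> * (real M ^ 2 - 1) + (real N ^ 2 - 1) * (1 - \<tau>) / (real N - 2)"
  define W where "W = \<epsilon> * real M * real N * pi^2 * real L * P * (cmod c3)^2 * K1"
  define D where "D = P * \<tau> * (pi^2 * c^2 * real M * (real M ^ 2 - 1) / 12) * real N * a2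
          + (1 - \<tau>) * P / (real N - 2) * real M * (pi^2 * c^2 * real N * (real N ^ 2 - 1) / 12 - Y)"
  define C where "C = pi^2 * real M * real N * P * K1 / 12"
  define Q where "Q = crbQ \<sigma> c3 L"
  have a2: "a2 > 0" unfolding a2_def using al by simp
  have "real M \<ge> 2" using M2 by simp
  then have "real M ^ 2 \<ge> 2 ^ 2" by (intro power_mono) auto
  then have Mg: "real M ^ 2 - 1 > 0" by simp
  have "real N \<ge> 3" using N3 by simp
  then have "real N ^ 2 \<ge> 3 ^ 2" by (intro power_mono) auto
  then have Ng: "real N ^ 2 - 1 > 0" by simp
  have N2: "real N - 2 > 0" using N3 by simp
  have K1: "K1 > 0" unfolding K1_def using a2 t0 t1 Mg Ng N2 by (intro add_pos_pos mult_pos_pos divide_pos_pos) auto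
  have W: "W > 0" unfolding W_def using e M2 N3 L1 P c3 K1 by (intro mult_pos_pos) auto
  have u: "uLc N M L P \<tau> \<sigma> c3 \<alpha> \<epsilon> = sqrt 6 * \<sigma> * inverse (sqrt W)"
    unfolding uLc_def W_def K1_def a2_def ..
  have u2: "(uLc N M L P \<tau> \<sigma> c3 \<alpha> \<epsilon>)^2 = 6 * \<sigma>^2 / W"
    unfolding u using W by (simp add: power_mult_distrib power_inverse divide_inverse)
  have c2: "c^2 < 6 * \<sigma>^2 / W" unfolding u2[symmetric] using c0 cu by (intro power_strict_mono) auto
  have D1: "P * \<tau> * (pi^2 * c^2 * real M * (real M ^ 2 - 1) / 12) * real N * a2 > 0"
    using P t0 c0 M2 Mg N3 a2 by (intro mult_pos_pos divide_pos_pos) auto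
  have D2: "(1 - \<tau>) * P / (real N - 2) * real M * (pi^2 * c^2 * real N * (real N ^ 2 - 1) / 12 - Y) \<ge> 0"
    using t1 P N2 Y1 by (intro mult_nonneg_nonneg divide_nonneg_pos) auto
  have Dpos: "D > 0" unfolding D_def using D1 D2 by linarith
  have DC: "D \<le> c^2 * C"
  proof -
    have "(1 - \<tau>) * P / (real N - 2) * real M * (pi^2 * c^2 * real N * (real N ^ 2 - 1) / 12 - Y)
        \<le> (1 - \<tau>) * P / (real N - 2) * real M * (pi^2 * c^2 * real N * (real N ^ 2 - 1) / 12)"
      using t1 P N2 Y0 by (intro mult_left_mono) auto
    moreover have "P * \<tau> * (pi^2 * c^2 * real M * (real M ^ 2 - 1) / 12) * real N * a2
        + (1 - \<tau>) * P / (real N - 2) * real M * (pi^2 * c^2 * real N * (real N ^ 2 - 1) / 12) = c^2 * C"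
      unfolding C_def K1_def using N2 by (simp add: field_simps)
    ultimately show ?thesis unfolding D_def by linarith
  qed
  have QC: "\<epsilon> * (6 * \<sigma>^2 / W) * C = Q"
    unfolding W_def C_def Q_def crbQ_def using e M2 N3 L1 P c3 K1 by (simp add: field_simps power2_eq_square)
  have Cpos: "C > 0" unfolding C_def using M2 N3 P K1 by simp
  have "\<epsilon> * D \<le> \<epsilon> * (c^2 * C)" using DC e by simp
  also have "\<dots> < \<epsilon> * ((6 * \<sigma>^2 / W) * C)"
    by (rule mult_strict_left_mono[OF mult_strict_right_mono[OF c2 Cpos] e])
  also have "\<dots> = Q" using QC by (simp add: mult.assoc)
  finally have "\<epsilon> * D < Q" .
  then have "\<epsilon> < Q / D" using Dpos by (simp add: field_simps)
  then show ?thesis by (simp only: Q_def D_def a2_def divide_inverse)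
qed


lemma u_pos:
  fixes N M L :: nat and P \<tau> \<sigma> \<epsilon> :: real and c3 \<alpha> :: complex
  assumes N3: "N \<ge> 3" and M2: "M \<ge> 2" and L1: "L \<ge> 1" and P: "P > 0" and t0: "0 < \<tau>" and t1: "\<tau> < 1"
    and s: "\<sigma> > 0" and c3: "c3 \<noteq> 0" and al: "\<alpha> \<noteq> 0" and e: "\<epsilon> > 0"
  shows "0 < uLc N M L P \<tau> \<sigma> c3 \<alpha> \<epsilon>"
proof -
  have "real M \<ge> 2" using M2 by simp
  then have "real M ^ 2 \<ge> 2 ^ 2" by (intro power_mono) auto
  then have Mg: "real M ^ 2 - 1 > 0" by simp
  have "real N \<ge> 3" using N3 by simp
  then have "real N ^ 2 \<ge> 3 ^ 2" by (intro power_mono) auto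
  then have Ng: "real N ^ 2 - 1 > 0" by simp
  have N2: "real N - 2 > 0" using N3 by simp
  have K1: "(cmod \<alpha>)^2 * \<tau> * (real M ^ 2 - 1) + (real N ^ 2 - 1) * (1 - \<tau>) / (real N - 2) > 0"
    using al t0 t1 Mg Ng N2 by (intro add_pos_pos mult_pos_pos divide_pos_pos) auto
  have "\<epsilon> * real M * real N * pi^2 * real L * P * (cmod c3)^2 *
        ((cmod \<alpha>)^2 * \<tau> * (real M ^ 2 - 1) + (real N ^ 2 - 1) * (1 - \<tau>) / (real N - 2)) > 0"
    using e M2 N3 L1 P c3 K1 by (intro mult_pos_pos) auto
  then show ?thesis unfolding uLc_def using s by simp
qed





definition Fn :: "nat \<Rightarrow> nat \<Rightarrow> nat \<Rightarrow> real \<Rightarrow> real \<Rightarrow> real \<Rightarrow> complex \<Rightarrow> complex \<Rightarrow> real \<Rightarrow> (nat \<Rightarrow> complex) \<Rightarrow> real" where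
  "Fn N M L P \<tau> \<sigma> c3 \<alpha> \<theta> h = crbQ \<sigma> c3 L * inverse (P * \<tau> * (pi^2 * (cos \<theta>)^2 * real M * (real M ^ 2 - 1) / 12) * real N * (cmod \<alpha>)^2
     + (1 - \<tau>) * P / (real N - 2) * real M * (pi^2 * (cos \<theta>)^2 * real N * (real N ^ 2 - 1) / 12
        - ((XA N \<theta> h)^2 + (XB N \<theta> h)^2) / (KK N h - ((TT N \<theta> h)^2 + (RR N \<theta> h)^2) / real N)))"

lemma meas_Fn[measurable]: "(\<lambda>x. Fn N M L P \<tau> \<sigma> c3 \<alpha> (fst x) (snd x)) \<in> borel_measurable (JL N)"
  unfolding Fn_def by measurable

lemma crb_F:
  fixes N M L :: nat and P \<tau> \<sigma> :: real and c3 \<alpha> \<beta> :: complex and \<theta> :: real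
    and h :: "nat \<Rightarrow> complex" and t :: "nat \<Rightarrow> nat \<Rightarrow> complex"
  assumes N3: "N \<ge> 3" and M2: "M \<ge> 2" and P: "P > 0" and tau: "0 < \<tau>" "\<tau> < 1" and al: "\<alpha> \<noteq> 0"
    and nsp: "\<not> in_span_a N \<theta> h" and onb: "is_compl_onb N \<theta> h t"
  shows "CRB N M L P \<tau> \<sigma> c3 \<alpha> \<beta> \<theta> h t = complex_of_real (Fn N M L P \<tau> \<sigma> c3 \<alpha> \<theta> h)"
    and "0 \<le> ((XA N \<theta> h)^2 + (XB N \<theta> h)^2) / (KK N h - ((TT N \<theta> h)^2 + (RR N \<theta> h)^2) / real N)"
    and "((XA N \<theta> h)^2 + (XB N \<theta> h)^2) / (KK N h - ((TT N \<theta> h)^2 + (RR N \<theta> h)^2) / real N) \<le> pi^2 * (cos \<theta>)^2 * real N * (real N ^ 2 - 1) / 12"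
proof -
  note m = crb_main[OF assms, unfolded XA_def[symmetric] XB_def[symmetric] KK_def[symmetric] TT_def[symmetric] RR_def[symmetric]
     cnorm2_steer']
  show "CRB N M L P \<tau> \<sigma> c3 \<alpha> \<beta> \<theta> h t = complex_of_real (Fn N M L P \<tau> \<sigma> c3 \<alpha> \<theta> h)"
    unfolding Fn_def by (rule m(1))
  show "0 \<le> ((XA N \<theta> h)^2 + (XB N \<theta> h)^2) / (KK N h - ((TT N \<theta> h)^2 + (RR N \<theta> h)^2) / real N)"
    using m(3) by simp
  show "((XA N \<theta> h)^2 + (XB N \<theta> h)^2) / (KK N h - ((TT N \<theta> h)^2 + (RR N \<theta> h)^2) / real N) \<le> pi^2 * (cos \<theta>)^2 * real N * (real N ^ 2 - 1) / 12"
    by (rule m(2))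
qed


theorem lemma2:
  fixes N M L :: nat and P \<tau> \<sigma> :: real and c3 \<alpha> \<beta> :: complex
  assumes "N \<ge> 3" and "M \<ge> 2" and "L \<ge> 1" and "P > 0" and "0 < \<tau>" and "\<tau> < 1"
    and "\<sigma> > 0" and "c3 \<noteq> 0" and "(cmod \<alpha>)^2 + (cmod \<beta>)^2 = 1" and "\<alpha> \<noteq> 0"
  shows
   "(\<forall>\<theta> h t. \<theta> \<in> {-pi/2<..<pi/2} \<and> \<not> in_span_a N \<theta> h \<and> is_compl_onb N \<theta> h t \<longrightarrow>
      (let \<gamma>1 = P * \<tau>; \<gamma>2 = (1 - \<tau>) * P / (real N - 2);
           r = (\<lambda>i. Re (exp (\<i> * complex_of_real (fphase N \<theta> i)) * h i));
           ti = (\<lambda>i. Im (exp (\<i> * complex_of_real (fphase N \<theta> i)) * h i));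
           k = (\<lambda>i. (cmod (h i))^2);
           R = (\<Sum>i=1..N. r i); T = (\<Sum>i=1..N. ti i); K = (\<Sum>i=1..N. k i);
           nb' = cnorm2 M (steer' M \<theta>); na' = cnorm2 N (steer' N \<theta>)
       in CRB N M L P \<tau> \<sigma> c3 \<alpha> \<beta> \<theta> h t =
            complex_of_real (crbQ \<sigma> c3 L * inverse
              (\<gamma>1 * nb' * real N * (cmod \<alpha>)^2
               + \<gamma>2 * real M * (na' -
                  ((\<Sum>i=1..N. - fphase' N \<theta> i * ti i)^2 + (\<Sum>i=1..N. fphase' N \<theta> i * r i)^2)
                  / (K - (T^2 + R^2) / real N))))
          \<and> nb' = pi^2 * (cos \<theta>)^2 * real M * (real M ^ 2 - 1) / 12
          \<and> na' = pi^2 * (cos \<theta>)^2 * real N * (real N ^ 2 - 1) / 12))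
   \<and> (\<forall>\<epsilon> tb. \<epsilon> > 0 \<and>
        (\<forall>\<theta> h. \<theta> \<in> {-pi/2<..<pi/2} \<and> \<not> in_span_a N \<theta> h \<longrightarrow> is_compl_onb N \<theta> h (tb \<theta> h)) \<longrightarrow>
      measure (joint_law N)
        {x \<in> space (joint_law N). fst x \<in> {-pi/2<..<pi/2} \<and> \<not> in_span_a N (fst x) (snd x) \<and>
           Re (CRB N M L P \<tau> \<sigma> c3 \<alpha> \<beta> (fst x) (snd x) (tb (fst x) (snd x))) > \<epsilon>}
      \<ge> PLc N M L P \<tau> \<sigma> c3 \<alpha> \<epsilon>)"
proof -
  have N1: "N \<ge> 1" and N2: "N \<ge> 2" using assms(1) by auto
  have part1: "\<forall>\<theta> h t. \<theta> \<in> {-pi/2<..<pi/2} \<and> \<not> in_span_a N \<theta> h \<and> is_compl_onb N \<theta> h t \<longrightarrow>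
      (let \<gamma>1 = P * \<tau>; \<gamma>2 = (1 - \<tau>) * P / (real N - 2);
           r = (\<lambda>i. Re (exp (\<i> * complex_of_real (fphase N \<theta> i)) * h i));
           ti = (\<lambda>i. Im (exp (\<i> * complex_of_real (fphase N \<theta> i)) * h i));
           k = (\<lambda>i. (cmod (h i))^2);
           R = (\<Sum>i=1..N. r i); T = (\<Sum>i=1..N. ti i); K = (\<Sum>i=1..N. k i);
           nb' = cnorm2 M (steer' M \<theta>); na' = cnorm2 N (steer' N \<theta>)
       in CRB N M L P \<tau> \<sigma> c3 \<alpha> \<beta> \<theta> h t =
            complex_of_real (crbQ \<sigma> c3 L * inverse
              (\<gamma>1 * nb' * real N * (cmod \<alpha>)^2
               + \<gamma>2 * real M * (na' -
                  ((\<Sum>i=1..N. - fphase' N \<theta> i * ti i)^2 + (\<Sum>i=1..N. fphase' N \<theta> i * r i)^2)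
                  / (K - (T^2 + R^2) / real N))))
          \<and> nb' = pi^2 * (cos \<theta>)^2 * real M * (real M ^ 2 - 1) / 12
          \<and> na' = pi^2 * (cos \<theta>)^2 * real N * (real N ^ 2 - 1) / 12)"
  proof (intro allI impI)
    fix \<theta> h t
    assume H: "\<theta> \<in> {-pi/2<..<pi/2} \<and> \<not> in_span_a N \<theta> h \<and> is_compl_onb N \<theta> h t"
    show "let \<gamma>1 = P * \<tau>; \<gamma>2 = (1 - \<tau>) * P / (real N - 2);
           r = (\<lambda>i. Re (exp (\<i> * complex_of_real (fphase N \<theta> i)) * h i));
           ti = (\<lambda>i. Im (exp (\<i> * complex_of_real (fphase N \<theta> i)) * h i));
           k = (\<lambda>i. (cmod (h i))^2);
           R = (\<Sum>i=1..N. r i); T = (\<Sum>i=1..N. ti i); K = (\<Sum>i=1..N. k i);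
           nb' = cnorm2 M (steer' M \<theta>); na' = cnorm2 N (steer' N \<theta>)
       in CRB N M L P \<tau> \<sigma> c3 \<alpha> \<beta> \<theta> h t =
            complex_of_real (crbQ \<sigma> c3 L * inverse
              (\<gamma>1 * nb' * real N * (cmod \<alpha>)^2
               + \<gamma>2 * real M * (na' -
                  ((\<Sum>i=1..N. - fphase' N \<theta> i * ti i)^2 + (\<Sum>i=1..N. fphase' N \<theta> i * r i)^2)
                  / (K - (T^2 + R^2) / real N))))
          \<and> nb' = pi^2 * (cos \<theta>)^2 * real M * (real M ^ 2 - 1) / 12
          \<and> na' = pi^2 * (cos \<theta>)^2 * real N * (real N ^ 2 - 1) / 12"
      unfolding Let_def
      by (intro conjI crb_main(1) cnorm2_steer') (use assms H in auto)
  qed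
  have part2: "\<forall>\<epsilon> tb. \<epsilon> > 0 \<and>
        (\<forall>\<theta> h. \<theta> \<in> {-pi/2<..<pi/2} \<and> \<not> in_span_a N \<theta> h \<longrightarrow> is_compl_onb N \<theta> h (tb \<theta> h)) \<longrightarrow>
      measure (joint_law N)
        {x \<in> space (joint_law N). fst x \<in> {-pi/2<..<pi/2} \<and> \<not> in_span_a N (fst x) (snd x) \<and>
           Re (CRB N M L P \<tau> \<sigma> c3 \<alpha> \<beta> (fst x) (snd x) (tb (fst x) (snd x))) > \<epsilon>}
      \<ge> PLc N M L P \<tau> \<sigma> c3 \<alpha> \<epsilon>"
  proof (intro allI impI)
    fix \<epsilon> :: real and tb :: "real \<Rightarrow> (nat \<Rightarrow> complex) \<Rightarrow> nat \<Rightarrow> nat \<Rightarrow> complex"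
    assume H: "\<epsilon> > 0 \<and> (\<forall>\<theta> h. \<theta> \<in> {-pi/2<..<pi/2} \<and> \<not> in_span_a N \<theta> h \<longrightarrow> is_compl_onb N \<theta> h (tb \<theta> h))"
    then have e: "\<epsilon> > 0" and tb: "\<And>\<theta> h. \<theta> \<in> {-pi/2<..<pi/2} \<Longrightarrow> \<not> in_span_a N \<theta> h \<Longrightarrow> is_compl_onb N \<theta> h (tb \<theta> h)"
      by auto
    define S where "S = {x \<in> space (joint_law N). fst x \<in> {-pi/2<..<pi/2} \<and> \<not> in_span_a N (fst x) (snd x) \<and>
           Re (CRB N M L P \<tau> \<sigma> c3 \<alpha> \<beta> (fst x) (snd x) (tb (fst x) (snd x))) > \<epsilon>}"
    define u where "u = uLc N M L P \<tau> \<sigma> c3 \<alpha> \<epsilon>"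
    show "measure (joint_law N) S \<ge> PLc N M L P \<tau> \<sigma> c3 \<alpha> \<epsilon>"
      unfolding S_def[symmetric]
    proof (cases "u < 1")
      case False
      then show ?thesis unfolding PLc_def u_def[symmetric] Let_def by simp
    next
      case True
      have u0: "0 < u" unfolding u_def using u_pos[OF assms(1-8) assms(10) e] .
      interpret J: prob_space "joint_law N" by (rule J_prob)
      interpret O: prob_space "\<Pi>\<^sub>M i\<in>{1..N}. CN01" by (rule Omega_prob)
      define S' where "S' = {x \<in> space (joint_law N). fst x \<in> {-pi/2<..<pi/2} \<and>
          \<not> (\<forall>i\<in>{1..N}. snd x i = snd x 1 / steer N (fst x) 1 * steer N (fst x) i) \<and>
          Fn N M L P \<tau> \<sigma> c3 \<alpha> (fst x) (snd x) > \<epsilon>}"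
      have SS': "S = S'"
        unfolding S_def S'_def
        apply (rule Collect_cong)
        subgoal for x
        proof (cases "fst x \<in> {-pi/2<..<pi/2} \<and> \<not> in_span_a N (fst x) (snd x)")
          case True
          then have "CRB N M L P \<tau> \<sigma> c3 \<alpha> \<beta> (fst x) (snd x) (tb (fst x) (snd x)) = complex_of_real (Fn N M L P \<tau> \<sigma> c3 \<alpha> (fst x) (snd x))"
            using crb_F(1)[OF assms(1,2,4,5,6,10) _ tb] by blast
          then show ?thesis using True span_iff[OF N1] by auto
        next
          case False
          then show ?thesis using span_iff[OF N1] by auto
        qed
        done
      have S'm: "S' \<in> sets (joint_law N)" unfolding S'_def joint_law_def using N1 by measurable
      define A where "A = {\<theta> \<in> {-pi/2<..<pi/2}. cos \<theta> < u}"
      define B where "B = A \<times> space (\<Pi>\<^sub>M i\<in>{1..N}. CN01)"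
      have Am: "A \<in> sets (uniform_measure lborel {-pi/2<..<pi/2})" unfolding A_def by measurable
      have Bm: "B \<in> sets (joint_law N)" unfolding B_def joint_law_def using Am by simp
      have "emeasure (joint_law N) B = emeasure (uniform_measure lborel {-pi/2<..<pi/2}) A * emeasure (\<Pi>\<^sub>M i\<in>{1..N}. CN01) (space (\<Pi>\<^sub>M i\<in>{1..N}. CN01))"
        unfolding B_def joint_law_def by (rule O.emeasure_pair_measure_Times[OF Am]) simp
      then have "emeasure (joint_law N) B = emeasure (uniform_measure lborel {-pi/2<..<pi/2}) A"
        using O.emeasure_space_1 by simp
      then have mB: "measure (joint_law N) B = 2 / pi * arcsin u"
        using measure_A[OF u0 True] unfolding A_def measure_def by simp
      define Z where "Z = {x \<in> space (joint_law N). snd x 2 = snd x 1 * (\<lambda>\<theta>. steer N \<theta> 2 / steer N \<theta> 1) (fst x)}"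
      have gm: "(\<lambda>\<theta>. steer N \<theta> 2 / steer N \<theta> 1) \<in> borel_measurable borel"
        by measurable
      have Zn: "Z \<in> null_sets (joint_law N)" unfolding Z_def by (rule Z_null[OF N2 gm])
      have sub: "B - Z \<subseteq> S'"
      proof
        fix x assume x: "x \<in> B - Z"
        then have xs: "x \<in> space (joint_law N)" using Bm sets.sets_into_space by blast
        have xB: "x \<in> B" using x by blast
        have "fst x \<in> A" using xB unfolding B_def by (cases x) simp
        then have th: "fst x \<in> {-pi/2<..<pi/2}" "cos (fst x) < u" unfolding A_def by simp_all
        have nsp: "\<not> (\<forall>i\<in>{1..N}. snd x i = snd x 1 / steer N (fst x) 1 * steer N (fst x) i)"
        proof
          assume a: "\<forall>i\<in>{1..N}. snd x i = snd x 1 / steer N (fst x) 1 * steer N (fst x) i"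
          have two: "2 \<in> {1..N}" using N2 by simp
          have "snd x 2 = snd x 1 / steer N (fst x) 1 * steer N (fst x) 2" by (rule bspec[OF a two])
          then have "x \<in> Z" unfolding Z_def using xs by simp
          then show False using x by simp
        qed
        then have ns: "\<not> in_span_a N (fst x) (snd x)" using span_iff[OF N1] by simp
        note cf = crb_F[OF assms(1,2,4,5,6,10) ns tb[OF th(1) ns]]
        have c0: "0 < cos (fst x)" using th(1) by (intro cos_gt_zero_pi) auto
        have "\<epsilon> < Fn N M L P \<tau> \<sigma> c3 \<alpha> (fst x) (snd x)"
          unfolding Fn_def
          by (rule bound[OF assms(1-8) assms(10) e c0 th(2)[unfolded u_def] cf(2) cf(3)])
        then show "x \<in> S'" unfolding S'_def using xs th nsp by simp
      qed
      have "measure (joint_law N) B = measure (joint_law N) (B - Z)"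
        by (rule measure_Diff_null_set[OF Bm Zn, symmetric])
      also have "\<dots> \<le> measure (joint_law N) S'"
        by (rule J.finite_measure_mono[OF sub S'm])
      finally have "2 / pi * arcsin u \<le> measure (joint_law N) S'" using mB by simp
      then show ?thesis unfolding PLc_def u_def[symmetric] Let_def SS' using True by simp
    qed
  qed
  show ?thesis using part1 part2 by blast
qed



end
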